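(* Let $\mathcal{K}$ be a Fraïssé class in a relational language $L$ with Fraïssé limit $\mathbf{K}$, exhaustion $\mathbf{K}=\bigcup_n\mathbf{A}_n$, $G=\mathrm{Aut}(\mathbf{K})$ and $H_m=\mathrm{Emb}(\mathbf{A}_m,\mathbf{K})$. Let $\mathcal{K}^*$ be an expansion of $\mathcal{K}$ such that the pair $(\mathcal{K}^*,\mathcal{K})$ is excellent. Then a set $S\subseteq H_m$ is minimal if and only if there are $\mathbf{K}'\in X_{\mathcal{K}^*}$ and $E\subseteq\mathcal{K}^*(\mathbf{A}_m)$ such that $S=H_m(E,\mathbf{K}')$.
   Context: $L^*=L\cup\{S_i\}$ adds new relation symbols; a class $\mathcal{K}^*$ of finite $L^*$-structures closed under isomorphism is an expansion of $\mathcal{K}$ if $\{\mathbf{A}^*|_L:\mathbf{A}^*\in\mathcal{K}^*\}=\mathcal{K}$; $\mathcal{K}^*(\mathbf{A})$ is the set of expansions of $\mathbf{A}$ lying in $\mathcal{K}^*$. The pair is excellent if: $\mathcal{K}^*$ is a Fraïssé class; it is precompact ($\mathcal{K}^*(\mathbf{A})$ finite for each $\mathbf{A}\in\mathcal{K}$); reasonable (for $\mathbf{A},\mathbf{B}\in\mathcal{K}$, an embedding $f:\mathbf{A}\to\mathbf{B}$ and $\mathbf{A}^*\in\mathcal{K}^*(\mathbf{A})$ there is $\mathbf{B}^*\in\mathcal{K}^*(\mathbf{B})$ with $f:\mathbf{A}^*\to\mathbf{B}^*$ an embedding); has the expansion property (for each $\mathbf{A}^*\in\mathcal{K}^*$ there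 is $\mathbf{B}\in\mathcal{K}$ such that every $\mathbf{B}^*\in\mathcal{K}^*(\mathbf{B})$ embeds $\mathbf{A}^*$); and $\mathcal{K}^*$ has the Ramsey property (for $\mathbf{A}\leq\mathbf{B}$ in $\mathcal{K}^*$ and $r\geq2$ there is $\mathbf{C}\in\mathcal{K}^*$ with $\mathbf{B}\leq\mathbf{C}$ such that every $c:\mathrm{Emb}(\mathbf{A},\mathbf{C})\to r$ is constant on $h\circ\mathrm{Emb}(\mathbf{A},\mathbf{B})$ for some $h\in\mathrm{Emb}(\mathbf{B},\mathbf{C})$). $X_{\mathcal{K}^*}$ is the set of $L^*$-expansions $\mathbf{K}'=\langle\mathbf{K},\vec S\rangle$ of $\mathbf{K}$ all of whose finite substructures lie in $\mathcal{K}^*$, topologized by basic open sets $\{\mathbf{K}':\mathbf{A}^*\subseteq\mathbf{K}'\}$, with the right $G$-action $S^{\mathbf{K}'g}(x_1,\dots,x_k)\iff S^{\mathbf{K}'}(g(x_1),\dots,g(x_k))$. For $f\in H_m$, $\mathbf{K}'\cdot f$ is the unique expansion of $\mathbf{A}_m$ with $f\in\mathrm{Emb}(\mathbf{K}'\cdot f,\mathbf{K}')$, and $H_m(E,\mathbf{K}')=\{f\in H_m:\mathbf{K}'\cdot f\in E\}$. Identify subsets of $H_m$ with $2^{H_m}$, on which $G$ acts on the right by $(\chi\cdot g)(f)=\chi(g\circ f)$. $S\subseteq H_m$ is minimal if the orbit closure $\overline{\chi_S\cdot G}\subseteq 2^{H_m}$ is a minimal $G$-flow (every orbit dense). *)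

theory Defs
  imports "HOL-Analysis.Analysis"
begin

text \<open>A structure in a relational language with symbol type 'r: a universe (a subset
  of nat; finite structures and the countable Fraisse limit all live on subsets of nat)
  together with an interpretation of each relation symbol as a predicate on tuples (lists).\<close>

type_synonym 'r struc = "nat set \<times> ('r \<Rightarrow> nat list \<Rightarrow> bool)"

definition carr :: "'r struc \<Rightarrow> nat set" where "carr A = fst A"
definition rel :: "'r struc \<Rightarrow> 'r \<Rightarrow> nat list \<Rightarrow> bool" where "rel A = snd A"

definition wf_struc :: "('r \<Rightarrow> nat) \<Rightarrow> 'r struc \<Rightarrow> bool" where
  "wf_struc ar A \<longleftrightarrow> (\<forall>R xs. rel A R xs \<longrightarrow> length xs = ar R \<and> set xs \<subseteq> carr A)"

definition fin_struc :: "('r \<Rightarrow> nat) \<Rightarrow> 'r struc \<Rightarrow> bool" where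
  "fin_struc ar A \<longleftrightarrow> wf_struc ar A \<and> finite (carr A)"

definition Emb :: "'r struc \<Rightarrow> 'r struc \<Rightarrow> (nat \<Rightarrow> nat) set" where
  "Emb A B = {f. f \<in> extensional (carr A) \<and> inj_on f (carr A) \<and> f ` carr A \<subseteq> carr B \<and>
      (\<forall>R xs. set xs \<subseteq> carr A \<longrightarrow> (rel A R xs \<longleftrightarrow> rel B R (map f xs)))}"

definition isomorphic :: "'r struc \<Rightarrow> 'r struc \<Rightarrow> bool" where
  "isomorphic A B \<longleftrightarrow> (\<exists>f\<in>Emb A B. f ` carr A = carr B)"

definition embeds :: "'r struc \<Rightarrow> 'r struc \<Rightarrow> bool" where
  "embeds A B \<longleftrightarrow> Emb A B \<noteq> {}"

definition substr :: "'r struc \<Rightarrow> nat set \<Rightarrow> 'r struc" where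
  "substr A D = (D, \<lambda>R xs. set xs \<subseteq> D \<and> rel A R xs)"

definition Aut :: "'r struc \<Rightarrow> (nat \<Rightarrow> nat) set" where
  "Aut K = {g \<in> Emb K K. g ` carr K = carr K}"

definition class_of_fin :: "('r \<Rightarrow> nat) \<Rightarrow> 'r struc set \<Rightarrow> bool" where
  "class_of_fin ar C \<longleftrightarrow> (\<forall>A\<in>C. fin_struc ar A)"

definition closed_iso :: "('r \<Rightarrow> nat) \<Rightarrow> 'r struc set \<Rightarrow> bool" where
  "closed_iso ar C \<longleftrightarrow> (\<forall>A B. A \<in> C \<longrightarrow> fin_struc ar B \<longrightarrow> isomorphic A B \<longrightarrow> B \<in> C)"

definition fraisse_class :: "('r \<Rightarrow> nat) \<Rightarrow> 'r struc set \<Rightarrow> bool" where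
  "fraisse_class ar C \<longleftrightarrow> class_of_fin ar C \<and> closed_iso ar C \<and> C \<noteq> {} \<and>
     (\<exists>C0. countable C0 \<and> C0 \<subseteq> C \<and> (\<forall>A\<in>C. \<exists>B\<in>C0. isomorphic B A)) \<and>
     (\<forall>A\<in>C. \<forall>D \<subseteq> carr A. substr A D \<in> C) \<and>
     (\<forall>A\<in>C. \<forall>B\<in>C. \<exists>Z\<in>C. embeds A Z \<and> embeds B Z) \<and>
     (\<forall>A\<in>C. \<forall>B\<in>C. \<forall>B'\<in>C. \<forall>f\<in>Emb A B. \<forall>f'\<in>Emb A B'.
        \<exists>Z\<in>C. \<exists>g\<in>Emb B Z. \<exists>g'\<in>Emb B' Z. \<forall>x\<in>carr A. g (f x) = g' (f' x))"

definition age :: "('r \<Rightarrow> nat) \<Rightarrow> 'r struc \<Rightarrow> 'r struc set" where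
  "age ar K = {A. fin_struc ar A \<and> embeds A K}"

definition ultrahomogeneous :: "'r struc \<Rightarrow> bool" where
  "ultrahomogeneous K \<longleftrightarrow> (\<forall>D. finite D \<longrightarrow> D \<subseteq> carr K \<longrightarrow>
      (\<forall>f\<in>Emb (substr K D) K. \<exists>g\<in>Aut K. \<forall>x\<in>D. g x = f x))"

text \<open>K is a Fraisse limit of C: a countable (it lives on a subset of nat) ultrahomogeneous
  L-structure whose age is C.\<close>
definition fraisse_limit :: "('r \<Rightarrow> nat) \<Rightarrow> 'r struc set \<Rightarrow> 'r struc \<Rightarrow> bool" where
  "fraisse_limit ar C K \<longleftrightarrow> wf_struc ar K \<and> ultrahomogeneous K \<and> age ar K = C"

definition exhaustion :: "'r struc \<Rightarrow> (nat \<Rightarrow> nat set) \<Rightarrow> bool" where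
  "exhaustion K D \<longleftrightarrow> (\<forall>n. finite (D n) \<and> D n \<subseteq> carr K \<and> D n \<subseteq> D (Suc n)) \<and>
      (\<Union>n. D n) = carr K"

definition A_ex :: "'r struc \<Rightarrow> (nat \<Rightarrow> nat set) \<Rightarrow> nat \<Rightarrow> 'r struc" where
  "A_ex K D n = substr K (D n)"

definition H :: "'r struc \<Rightarrow> (nat \<Rightarrow> nat set) \<Rightarrow> nat \<Rightarrow> (nat \<Rightarrow> nat) set" where
  "H K D m = Emb (A_ex K D m) K"

text \<open>L* = L \<union> {S_i}: symbols of type 'r + 's, the new ones having arities ars.\<close>
definition arx :: "('r \<Rightarrow> nat) \<Rightarrow> ('s \<Rightarrow> nat) \<Rightarrow> ('r + 's) \<Rightarrow> nat" where
  "arx ar ars = case_sum ar ars"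

definition reduct :: "('r + 's) struc \<Rightarrow> 'r struc" where
  "reduct A = (carr A, \<lambda>R xs. rel A (Inl R) xs)"

definition is_expansion :: "('r \<Rightarrow> nat) \<Rightarrow> ('s \<Rightarrow> nat) \<Rightarrow> ('r + 's) struc set \<Rightarrow> 'r struc set \<Rightarrow> bool" where
  "is_expansion ar ars Ks C \<longleftrightarrow> class_of_fin (arx ar ars) Ks \<and> closed_iso (arx ar ars) Ks \<and>
      reduct ` Ks = C"

definition expansions_of :: "('r + 's) struc set \<Rightarrow> 'r struc \<Rightarrow> ('r + 's) struc set" where
  "expansions_of Ks A = {As \<in> Ks. reduct As = A}"

definition ramsey_property :: "('r + 's) struc set \<Rightarrow> bool" where
  "ramsey_property Ks \<longleftrightarrow> (\<forall>A\<in>Ks. \<forall>B\<in>Ks. embeds A B \<longrightarrow> (\<forall>r::nat. r \<ge> 2 \<longrightarrow>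
     (\<exists>C\<in>Ks. embeds B C \<and> (\<forall>c. c ` Emb A C \<subseteq> {..<r} \<longrightarrow>
        (\<exists>h\<in>Emb B C. \<exists>k. \<forall>e\<in>Emb A B. c (compose (carr A) h e) = k)))))"

definition excellent :: "('r \<Rightarrow> nat) \<Rightarrow> ('s \<Rightarrow> nat) \<Rightarrow> ('r + 's) struc set \<Rightarrow> 'r struc set \<Rightarrow> bool" where
  "excellent ar ars Ks C \<longleftrightarrow>
     fraisse_class (arx ar ars) Ks \<and>
     (\<forall>A\<in>C. finite (expansions_of Ks A)) \<and>
     (\<forall>A\<in>C. \<forall>B\<in>C. \<forall>f\<in>Emb A B. \<forall>As\<in>expansions_of Ks A.
        \<exists>Bs\<in>expansions_of Ks B. f \<in> Emb As Bs) \<and>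
     (\<forall>As\<in>Ks. \<exists>B\<in>C. \<forall>Bs\<in>expansions_of Ks B. embeds As Bs) \<and>
     ramsey_property Ks"

definition X_space :: "('r \<Rightarrow> nat) \<Rightarrow> ('s \<Rightarrow> nat) \<Rightarrow> ('r + 's) struc set \<Rightarrow> 'r struc \<Rightarrow> ('r + 's) struc set" where
  "X_space ar ars Ks K = {Kp. wf_struc (arx ar ars) Kp \<and> reduct Kp = K \<and>
      (\<forall>D. finite D \<longrightarrow> D \<subseteq> carr Kp \<longrightarrow> substr Kp D \<in> Ks)}"

definition pullback :: "('r + 's) struc \<Rightarrow> nat set \<Rightarrow> (nat \<Rightarrow> nat) \<Rightarrow> ('r + 's) struc" where
  "pullback Kp Dm f = (Dm, \<lambda>R xs. set xs \<subseteq> Dm \<and> rel Kp R (map f xs))"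

definition H_E :: "'r struc \<Rightarrow> (nat \<Rightarrow> nat set) \<Rightarrow> nat \<Rightarrow> ('r + 's) struc set \<Rightarrow> ('r + 's) struc
     \<Rightarrow> (nat \<Rightarrow> nat) set" where
  "H_E K D m E Kp = {f \<in> H K D m. pullback Kp (D m) f \<in> E}"

text \<open>Points of 2^{H_m} are characteristic functions vanishing outside H_m; the topology is
  the product topology on functions (nat \<Rightarrow> nat) \<Rightarrow> bool (the subspace 2^{H_m} is closed).\<close>
definition act :: "'r struc \<Rightarrow> (nat \<Rightarrow> nat set) \<Rightarrow> nat \<Rightarrow> ((nat \<Rightarrow> nat) \<Rightarrow> bool) \<Rightarrow> (nat \<Rightarrow> nat)
     \<Rightarrow> ((nat \<Rightarrow> nat) \<Rightarrow> bool)" where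
  "act K D m c g = (\<lambda>f. f \<in> H K D m \<and> c (compose (D m) g f))"

definition orbit :: "'r struc \<Rightarrow> (nat \<Rightarrow> nat set) \<Rightarrow> nat \<Rightarrow> ((nat \<Rightarrow> nat) \<Rightarrow> bool)
     \<Rightarrow> ((nat \<Rightarrow> nat) \<Rightarrow> bool) set" where
  "orbit K D m c = (\<lambda>g. act K D m c g) ` Aut K"

definition minimal_set :: "'r struc \<Rightarrow> (nat \<Rightarrow> nat set) \<Rightarrow> nat \<Rightarrow> (nat \<Rightarrow> nat) set \<Rightarrow> bool" where
  "minimal_set K D m S \<longleftrightarrow>
     (\<forall>y \<in> closure (orbit K D m (\<lambda>f. f \<in> S)). closure (orbit K D m y) = closure (orbit K D m (\<lambda>f. f \<in> S)))"

end

theory Submission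
  imports Defs
begin


lemma carr_substr[simp]: "carr (substr A Y) = Y" by (simp add: carr_def substr_def)
lemma rel_substr[simp]: "rel (substr A Y) R xs \<longleftrightarrow> set xs \<subseteq> Y \<and> rel A R xs" by (simp add: rel_def substr_def)
lemma carr_pullback[simp]: "carr (pullback P X f) = X" by (simp add: carr_def pullback_def)
lemma rel_pullback[simp]: "rel (pullback P X f) R xs \<longleftrightarrow> set xs \<subseteq> X \<and> rel P R (map f xs)"
  by (simp add: rel_def pullback_def)
lemma carr_reduct[simp]: "carr (reduct P) = carr P" by (simp add: carr_def reduct_def)
lemma rel_reduct[simp]: "rel (reduct P) R xs = rel P (Inl R) xs" by (simp add: rel_def reduct_def)
lemma carr_A_ex[simp]: "carr (A_ex K D n) = D n" by (simp add: A_ex_def)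

lemma struc_eq: "carr A = carr B \<Longrightarrow> (\<And>R xs. rel A R xs = rel B R xs) \<Longrightarrow> A = B"
  by (simp add: carr_def rel_def prod_eq_iff fun_eq_iff)

lemma EmbD: assumes "f \<in> Emb A B"
  shows "f \<in> extensional (carr A)" "inj_on f (carr A)" "f ` carr A \<subseteq> carr B"
    "\<And>R xs. set xs \<subseteq> carr A \<Longrightarrow> rel A R xs \<longleftrightarrow> rel B R (map f xs)"
  using assms by (auto simp: Emb_def)

lemma EmbI: "f \<in> extensional (carr A) \<Longrightarrow> inj_on f (carr A) \<Longrightarrow> f ` carr A \<subseteq> carr B \<Longrightarrow>
   (\<And>R xs. set xs \<subseteq> carr A \<Longrightarrow> rel A R xs \<longleftrightarrow> rel B R (map f xs)) \<Longrightarrow> f \<in> Emb A B"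
  by (auto simp: Emb_def)

lemma Emb_compose: assumes f: "f \<in> Emb A B" and g: "g \<in> Emb B C"
  shows "compose (carr A) g f \<in> Emb A C"
proof (rule EmbI)
  show "compose (carr A) g f \<in> extensional (carr A)" by (simp add: compose_extensional)
  show "inj_on (compose (carr A) g f) (carr A)"
  proof -
    have "inj_on (g \<circ> f) (carr A)"
      using EmbD(2,3)[OF f] EmbD(2)[OF g] by (meson comp_inj_on inj_on_subset)
    then show ?thesis by (rule inj_on_cong[THEN iffD1, rotated]) (simp add: compose_eq)
  qed
  show "compose (carr A) g f ` carr A \<subseteq> carr C"
    using EmbD(3)[OF f] EmbD(3)[OF g] by (auto simp: compose_def)
  fix R xs assume xs: "set xs \<subseteq> carr A"
  have e: "rel C R (map (compose (carr A) g f) xs) = rel C R (map g (map f xs))"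
    by (rule arg_cong[where f="rel C R"]) (use xs in \<open>auto simp: compose_def\<close>)
  have "set (map f xs) \<subseteq> carr B" using xs EmbD(3)[OF f] by auto
  then show "rel A R xs \<longleftrightarrow> rel C R (map (compose (carr A) g f) xs)"
    using EmbD(4)[OF f xs] EmbD(4)[OF g] e by simp
qed

lemma compose_assoc: assumes "e ` X \<subseteq> Y"
  shows "compose X (compose Y h1 h2) e = compose X h1 (compose X h2 e)"
  using assms by (auto simp: compose_def fun_eq_iff)

lemma Emb_reduct: "e \<in> Emb A B \<Longrightarrow> e \<in> Emb (reduct A) (reduct B)"
  by (auto simp: Emb_def)

lemma reduct_substr: "reduct (substr P Y) = substr (reduct P) Y"
  by (rule struc_eq) auto

lemma substr_substr: "Y \<subseteq> Y' \<Longrightarrow> substr (substr P Y') Y = substr P Y"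
  by (rule struc_eq) auto

lemma substr_carr: "wf_struc ar P \<Longrightarrow> substr P (carr P) = P"
  by (rule struc_eq) (auto simp: wf_struc_def)

lemma pullback_substr: "f ` X \<subseteq> Y \<Longrightarrow> pullback (substr P Y) X f = pullback P X f"
  by (rule struc_eq) auto

lemma pullback_pullback: "f ` X \<subseteq> Y \<Longrightarrow> pullback (pullback P Y \<phi>) X f = pullback P X (compose X \<phi> f)"
proof (rule struc_eq)
  fix R xs assume "f ` X \<subseteq> Y"
  then show "rel (pullback (pullback P Y \<phi>) X f) R xs = rel (pullback P X (compose X \<phi> f)) R xs"
  proof (cases "set xs \<subseteq> X")
    case True
    then have eq: "map (compose X \<phi> f) xs = map (\<phi> \<circ> f) xs" by (auto simp: compose_def)
    show ?thesis using True \<open>f ` X \<subseteq> Y\<close> by (auto simp: eq)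
  qed auto
qed simp

lemma pullback_cong: "(\<And>x. x \<in> X \<Longrightarrow> f x = g x) \<Longrightarrow> pullback P X f = pullback P X g"
proof (rule struc_eq)
  fix R xs assume "\<And>x. x \<in> X \<Longrightarrow> f x = g x"
  then show "rel (pullback P X f) R xs = rel (pullback P X g) R xs"
    by (cases "set xs \<subseteq> X") (auto intro!: arg_cong[where f="rel P R"] map_cong)
qed simp

lemma pullback_Emb: assumes e: "e \<in> Emb A B" and f: "f ` X \<subseteq> carr A"
  shows "pullback B X (compose X e f) = pullback A X f"
proof (rule struc_eq)
  fix R xs
  show "rel (pullback B X (compose X e f)) R xs = rel (pullback A X f) R xs"
  proof (cases "set xs \<subseteq> X")
    case True
    have eq: "rel B R (map (compose X e f) xs) = rel B R (map e (map f xs))"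
      by (rule arg_cong[where f="rel B R"]) (use True in \<open>auto simp: compose_def\<close>)
    have "set (map f xs) \<subseteq> carr A" using True f by auto
    then show ?thesis using True eq EmbD(4)[OF e] by simp
  qed simp
qed simp

lemma Emb_pullback: "f \<in> extensional X \<Longrightarrow> inj_on f X \<Longrightarrow> f ` X \<subseteq> carr P \<Longrightarrow> f \<in> Emb (pullback P X f) P"
  by (rule EmbI) auto

lemma reduct_pullback: assumes "f \<in> Emb A (reduct P)" "wf_struc ar A"
  shows "reduct (pullback P (carr A) f) = A"
proof (rule struc_eq)
  fix R xs
  show "rel (reduct (pullback P (carr A) f)) R xs = rel A R xs"
    using EmbD(4)[OF assms(1), of xs R] assms(2) by (auto simp: wf_struc_def)
qed simp

lemma Emb_substr_target: "f \<in> Emb A B \<Longrightarrow> f ` carr A \<subseteq> Y \<Longrightarrow> f \<in> Emb A (substr B Y)"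
  unfolding Emb_def by (auto 4 4)

lemma Emb_restrict: assumes f: "f \<in> Emb A B" and Y: "Y \<subseteq> carr A"
  shows "restrict f Y \<in> Emb (substr A Y) B"
proof (rule EmbI)
  show "restrict f Y \<in> extensional (carr (substr A Y))" by simp
  show "inj_on (restrict f Y) (carr (substr A Y))"
    using EmbD(2)[OF f] Y by (simp add: inj_on_def subset_iff)
  show "restrict f Y ` carr (substr A Y) \<subseteq> carr B" using EmbD(3)[OF f] Y by auto
  fix R xs assume xs: "set xs \<subseteq> carr (substr A Y)"
  have e: "rel B R (map (restrict f Y) xs) = rel B R (map f xs)"
    by (rule arg_cong[where f="rel B R"]) (use xs in \<open>auto\<close>)
  show "rel (substr A Y) R xs \<longleftrightarrow> rel B R (map (restrict f Y) xs)"
    using EmbD(4)[OF f, of xs R] xs Y e by auto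
qed

lemma Emb_id_substr: "Y \<subseteq> carr A \<Longrightarrow> restrict id Y \<in> Emb (substr A Y) A"
proof (rule EmbI)
  fix R xs assume "Y \<subseteq> carr A" and xs: "set xs \<subseteq> carr (substr A Y)"
  have e: "rel A R (map (restrict id Y) xs) = rel A R xs"
    by (rule arg_cong[where f="rel A R"]) (use xs in \<open>auto intro!: map_idI\<close>)
  show "rel (substr A Y) R xs \<longleftrightarrow> rel A R (map (restrict id Y) xs)" using e xs by simp
qed auto

lemma iso_sym_lemma: assumes Z: "Z = substr P (f ` X)" and inj: "inj_on f X"
  shows "restrict (inv_into X f) (f ` X) \<in> Emb Z (pullback P X f)"
proof (rule EmbI)
  show "restrict (inv_into X f) (f ` X) \<in> extensional (carr Z)" using Z by simp
  show "inj_on (restrict (inv_into X f) (f ` X)) (carr Z)" using Z inj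
    by (simp add: inj_on_def)
  show "restrict (inv_into X f) (f ` X) ` carr Z \<subseteq> carr (pullback P X f)"
    using Z by (auto simp: inv_into_into)
  fix R xs assume xs: "set xs \<subseteq> carr Z"
  then have "map f (map (restrict (inv_into X f) (f ` X)) xs) = xs"
    using Z by (auto intro!: map_idI simp: f_inv_into_f)
  moreover have "set (map (restrict (inv_into X f) (f ` X)) xs) \<subseteq> X"
    using Z xs by (auto simp: inv_into_into)
  ultimately show "rel Z R xs \<longleftrightarrow> rel (pullback P X f) R (map (restrict (inv_into X f) (f ` X)) xs)"
    using Z xs by simp
qed



lemma closure_fun_bool:
  "(c::'a \<Rightarrow> bool) \<in> closure Ob \<longleftrightarrow> (\<forall>\<Phi>. finite \<Phi> \<longrightarrow> (\<exists>u\<in>Ob. \<forall>f\<in>\<Phi>. u f = c f))"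
proof
  assume c: "c \<in> closure Ob"
  show "\<forall>\<Phi>. finite \<Phi> \<longrightarrow> (\<exists>u\<in>Ob. \<forall>f\<in>\<Phi>. u f = c f)"
  proof (intro allI impI)
    fix \<Phi> :: "'a set" assume "finite \<Phi>"
    have "open {f. \<forall>i\<in>\<Phi>. f (id i) \<in> {c i}}"
      by (rule product_topology_basis') (auto simp: \<open>finite \<Phi>\<close> intro: open_discrete)
    moreover have "c \<in> {f. \<forall>i\<in>\<Phi>. f (id i) \<in> {c i}}" by auto
    ultimately have "Ob \<inter> {f. \<forall>i\<in>\<Phi>. f (id i) \<in> {c i}} \<noteq> {}"
      using c unfolding closure_iff_nhds_not_empty by blast
    then show "\<exists>u\<in>Ob. \<forall>f\<in>\<Phi>. u f = c f" by auto
  qed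
next
  assume R: "\<forall>\<Phi>. finite \<Phi> \<longrightarrow> (\<exists>u\<in>Ob. \<forall>f\<in>\<Phi>. u f = c f)"
  show "c \<in> closure Ob"
    unfolding closure_iff_nhds_not_empty
  proof (intro allI impI)
    fix A S assume SA: "S \<subseteq> A" and "open S" and cS: "c \<in> S"
    then have "openin (product_topology (\<lambda>i. euclidean) UNIV) S" by (simp add: open_fun_def)
    then obtain U where U: "finite {i \<in> UNIV. U i \<noteq> topspace (euclidean::bool topology)}"
        "c \<in> Pi\<^sub>E UNIV U" "Pi\<^sub>E UNIV U \<subseteq> S"
      using cS unfolding openin_product_topology_alt by blast
    then obtain u where u: "u \<in> Ob" "\<forall>f\<in>{i \<in> UNIV. U i \<noteq> topspace (euclidean::bool topology)}. u f = c f"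
      using R by blast
    have "u \<in> Pi\<^sub>E UNIV U" unfolding PiE_iff
    proof (intro conjI ballI)
      fix i :: 'a
      show "u i \<in> U i"
      proof (cases "U i = UNIV")
        case False then show ?thesis using u(2) U(2) by (auto simp: PiE_iff)
      qed simp
    qed simp
    then show "Ob \<inter> A \<noteq> {}" using u(1) U(3) SA by blast
  qed
qed





locale sett =
  fixes ar :: "'r \<Rightarrow> nat" and ars :: "'s \<Rightarrow> nat"
    and KK :: "'r struc set" and K :: "'r struc" and D :: "nat \<Rightarrow> nat set"
    and Ks :: "('r + 's) struc set" and m :: nat
  assumes fl: "fraisse_limit ar KK K" and ex: "exhaustion K D"
    and ie: "is_expansion ar ars Ks KK" and exc: "excellent ar ars Ks KK"
begin

abbreviation "Hm \<equiv> H K D m"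
definition Phi :: "nat \<Rightarrow> (nat \<Rightarrow> nat) set" where "Phi n = {f \<in> Hm. f ` D m \<subseteq> D n}"
definition good :: "('r + 's) struc \<Rightarrow> bool" where
  "good P \<longleftrightarrow> wf_struc (arx ar ars) P \<and> (\<forall>Y. finite Y \<longrightarrow> Y \<subseteq> carr P \<longrightarrow> substr P Y \<in> Ks)"

lemma wfK: "wf_struc ar K" using fl by (simp add: fraisse_limit_def)
lemma ageK: "age ar K = KK" using fl by (simp add: fraisse_limit_def)
lemma uhK: "ultrahomogeneous K" using fl by (simp add: fraisse_limit_def)

lemma D_fin: "finite (D n)" and D_sub: "D n \<subseteq> carr K" and D_Suc: "D n \<subseteq> D (Suc n)"
  and D_Un: "(\<Union>n. D n) = carr K"
  using ex by (auto simp: exhaustion_def)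

lemma D_mono: "n \<le> k \<Longrightarrow> D n \<subseteq> D k"
  by (induction k rule: dec_induct) (use D_Suc in auto)

lemma finite_in_D: assumes "finite X" "X \<subseteq> carr K" shows "\<exists>n. X \<subseteq> D n"
  using assms
proof (induction X rule: finite_induct)
  case empty then show ?case by auto
next
  case (insert x F)
  then obtain n where n: "F \<subseteq> D n" by auto
  obtain k where k: "x \<in> D k" using insert.prems D_Un by auto
  have "F \<subseteq> D (max n k)" "x \<in> D (max n k)" using n k D_mono[of n "max n k"] D_mono[of k "max n k"] by auto
  then show ?case by blast
qed

lemma Ks_fc: "fraisse_class (arx ar ars) Ks" using exc by (simp add: excellent_def)
lemma Ks_fin: "P \<in> Ks \<Longrightarrow> fin_struc (arx ar ars) P"
  using Ks_fc unfolding fraisse_class_def class_of_fin_def by blast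
lemma Ks_HP: "P \<in> Ks \<Longrightarrow> Y \<subseteq> carr P \<Longrightarrow> substr P Y \<in> Ks"
  using Ks_fc unfolding fraisse_class_def by blast
lemma Ks_iso: "P \<in> Ks \<Longrightarrow> fin_struc (arx ar ars) Q \<Longrightarrow> isomorphic P Q \<Longrightarrow> Q \<in> Ks"
  using Ks_fc unfolding fraisse_class_def closed_iso_def by blast

lemma reduct_Ks: "reduct ` Ks = KK" using ie by (simp add: is_expansion_def)

lemma precompact: "A \<in> KK \<Longrightarrow> finite (expansions_of Ks A)"
  using exc by (simp add: excellent_def)

lemma exp_prop: "A \<in> Ks \<Longrightarrow> \<exists>B\<in>KK. \<forall>Bs\<in>expansions_of Ks B. embeds A Bs"
  using exc by (simp add: excellent_def)

lemma ramsey: "ramsey_property Ks"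
  using exc by (simp add: excellent_def)

lemma KK_emb: "A \<in> KK \<Longrightarrow> \<exists>\<iota>. \<iota> \<in> Emb A K"
  using ageK by (auto simp: age_def embeds_def)

lemma KK_fin: "A \<in> KK \<Longrightarrow> fin_struc ar A"
  using ageK by (auto simp: age_def)

lemma substr_KK: assumes "finite Y" "Y \<subseteq> carr K" shows "substr K Y \<in> KK"
proof -
  have "fin_struc ar (substr K Y)" using wfK assms by (auto simp: fin_struc_def wf_struc_def)
  moreover have "embeds (substr K Y) K" using Emb_id_substr[OF assms(2)] by (auto simp: embeds_def)
  ultimately show ?thesis using ageK by (auto simp: age_def)
qed

lemma A_ex_KK: "A_ex K D n \<in> KK"
  unfolding A_ex_def by (rule substr_KK[OF D_fin D_sub])

lemma uh: assumes "e \<in> Emb (A_ex K D n) K" shows "\<exists>g\<in>Aut K. \<forall>x\<in>D n. g x = e x"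
  using uhK D_fin D_sub assms unfolding ultrahomogeneous_def A_ex_def by blast

lemma Aut_Emb: "g \<in> Aut K \<Longrightarrow> g \<in> Emb K K" by (simp add: Aut_def)

lemma Aut_compose: assumes "g \<in> Aut K" "h \<in> Aut K" shows "compose (carr K) g h \<in> Aut K"
proof -
  have "compose (carr K) g h ` carr K = g ` (h ` carr K)" by (auto simp: compose_def)
  then show ?thesis using assms Emb_compose[of h K K g K] unfolding Aut_def by auto
qed

lemma id_Aut: "restrict id (carr K) \<in> Aut K"
  using Emb_id_substr[of "carr K" K] substr_carr[OF wfK] unfolding Aut_def by auto

lemma good_Ks: "P \<in> Ks \<Longrightarrow> good P"
  using Ks_fin Ks_HP by (auto simp: good_def fin_struc_def)

lemma good_X: "Kp \<in> X_space ar ars Ks K \<Longrightarrow> good Kp"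
  by (auto simp: good_def X_space_def)

lemma pullback_Ks: assumes g: "good Kp" and X: "finite X" and inj: "inj_on f X" and fX: "f ` X \<subseteq> carr Kp"
  shows "pullback Kp X f \<in> Ks"
proof -
  have Z: "substr Kp (f ` X) \<in> Ks" using g X fX by (auto simp: good_def)
  have wf: "wf_struc (arx ar ars) Kp" using g by (simp add: good_def)
  have "wf_struc (arx ar ars) (pullback Kp X f)"
    unfolding wf_struc_def
  proof (intro allI impI)
    fix R xs assume "rel (pullback Kp X f) R xs"
    then have "set xs \<subseteq> X" "rel Kp R (map f xs)" by auto
    then show "length xs = arx ar ars R \<and> set xs \<subseteq> carr (pullback Kp X f)"
      using wf unfolding wf_struc_def by (metis carr_pullback length_map)
  qed
  then have "fin_struc (arx ar ars) (pullback Kp X f)" using X by (simp add: fin_struc_def)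
  moreover have "isomorphic (substr Kp (f ` X)) (pullback Kp X f)"
    unfolding isomorphic_def
  proof (rule bexI)
    show "restrict (inv_into X f) (f ` X) \<in> Emb (substr Kp (f ` X)) (pullback Kp X f)"
      by (rule iso_sym_lemma[OF refl inj])
    show "restrict (inv_into X f) (f ` X) ` carr (substr Kp (f ` X)) = carr (pullback Kp X f)"
      using inj by (auto simp: image_image)
  qed
  ultimately show ?thesis using Ks_iso[OF Z] by blast
qed

lemma HD: assumes "f \<in> Hm"
  shows "f \<in> extensional (D m)" "inj_on f (D m)" "f ` D m \<subseteq> carr K"
  using EmbD[OF assms[unfolded H_def]] by auto

lemma Hm_into_fin: assumes "finite V" shows "finite {f \<in> Hm. f ` D m \<subseteq> V}"
proof -
  have "{f \<in> Hm. f ` D m \<subseteq> V} \<subseteq> D m \<rightarrow>\<^sub>E V" using HD(1) by (auto simp: PiE_def)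
  then show ?thesis using finite_PiE[of "D m" "\<lambda>_. V"] D_fin assms finite_subset by blast
qed

lemma Phi_fin: "finite (Phi n)"
  unfolding Phi_def by (rule Hm_into_fin[OF D_fin])

lemma Phi_mono: "n \<le> k \<Longrightarrow> Phi n \<subseteq> Phi k" using D_mono by (fastforce simp: Phi_def)

lemma Phi_cover: assumes "finite F" "F \<subseteq> Hm" shows "\<exists>n. F \<subseteq> Phi n"
proof -
  have "finite (\<Union>f\<in>F. f ` D m)" using assms D_fin by auto
  moreover have "(\<Union>f\<in>F. f ` D m) \<subseteq> carr K" using assms HD(3) by auto
  ultimately obtain n where "(\<Union>f\<in>F. f ` D m) \<subseteq> D n" using finite_in_D by blast
  then have "F \<subseteq> Phi n" using assms by (auto simp: Phi_def)
  then show ?thesis by blast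
qed

lemma Emb_Phi: "f \<in> Phi n \<Longrightarrow> f \<in> Emb (A_ex K D m) (A_ex K D n)"
  unfolding Phi_def H_def A_ex_def using Emb_substr_target[of f "substr K (D m)" K "D n"] by auto

lemma Hm_compose: "f \<in> Hm \<Longrightarrow> g \<in> Aut K \<Longrightarrow> compose (D m) g f \<in> Hm"
  unfolding H_def using Emb_compose[of f "A_ex K D m" K g K] Aut_Emb by auto

lemma pullback_exp: assumes "good P" "f \<in> Emb (A_ex K D m) (reduct P)"
  shows "pullback P (D m) f \<in> expansions_of Ks (A_ex K D m)"
proof -
  have wf: "wf_struc ar (A_ex K D m)" using KK_fin[OF A_ex_KK] by (simp add: fin_struc_def)
  have "pullback P (D m) f \<in> Ks"
    using pullback_Ks[OF assms(1) D_fin] EmbD[OF assms(2)] by auto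
  moreover have "reduct (pullback P (D m) f) = A_ex K D m"
    using reduct_pullback[OF assms(2) wf] by simp
  ultimately show ?thesis by (simp add: expansions_of_def)
qed

end



context sett begin

lemma act_eq: "act K D m c g f \<longleftrightarrow> f \<in> Hm \<and> c (compose (D m) g f)"
  by (simp add: act_def)

lemma closure_orbit_iff: "y \<in> closure (orbit K D m c) \<longleftrightarrow>
   (\<forall>\<Phi>. finite \<Phi> \<longrightarrow> (\<exists>g\<in>Aut K. \<forall>f\<in>\<Phi>. act K D m c g f = y f))"
  unfolding closure_fun_bool orbit_def by blast

lemma closure_orbit_trans:
  assumes y: "y \<in> closure (orbit K D m c)" and z: "z \<in> closure (orbit K D m y)"
  shows "z \<in> closure (orbit K D m c)"
  unfolding closure_orbit_iff
proof (intro allI impI)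
  fix \<Phi> :: "(nat \<Rightarrow> nat) set" assume fin: "finite \<Phi>"
  have "\<exists>g\<in>Aut K. \<forall>f\<in>\<Phi>. act K D m y g f = z f"
    using z fin by (simp only: closure_orbit_iff)
  then obtain g where g: "g \<in> Aut K" "\<forall>f\<in>\<Phi>. act K D m y g f = z f" by (elim bexE)
  have "finite ((\<lambda>f. compose (D m) g f) ` (\<Phi> \<inter> Hm))" using fin by simp
  then have "\<exists>g'\<in>Aut K. \<forall>f\<in>(\<lambda>f. compose (D m) g f) ` (\<Phi> \<inter> Hm). act K D m c g' f = y f"
    using y by (simp only: closure_orbit_iff)
  then obtain g' where g': "g' \<in> Aut K" "\<forall>f\<in>(\<lambda>f. compose (D m) g f) ` (\<Phi> \<inter> Hm). act K D m c g' f = y f"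
    by (elim bexE)
  show "\<exists>g\<in>Aut K. \<forall>f\<in>\<Phi>. act K D m c g f = z f"
  proof (intro bexI ballI)
    show "compose (carr K) g' g \<in> Aut K" by (rule Aut_compose[OF g'(1) g(1)])
    fix f assume f: "f \<in> \<Phi>"
    show "act K D m c (compose (carr K) g' g) f = z f"
    proof (cases "f \<in> Hm")
      case True
      have ca: "compose (D m) (compose (carr K) g' g) f = compose (D m) g' (compose (D m) g f)"
        by (rule compose_assoc[OF HD(3)[OF True]])
      have "z f = act K D m y g f" using g f by simp
      also have "\<dots> = y (compose (D m) g f)" using True by (simp add: act_eq)
      also have "\<dots> = act K D m c g' (compose (D m) g f)" using g' f True by auto
      also have "\<dots> = c (compose (D m) g' (compose (D m) g f))"
        using Hm_compose[OF True g(1)] by (simp add: act_eq)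
      finally show ?thesis using True ca by (simp add: act_eq)
    next
      case False
      have "z f = act K D m y g f" using g f by simp
      then show ?thesis using False by (simp add: act_eq)
    qed
  qed
qed

lemma self_in_closure: assumes "\<And>f. c f \<Longrightarrow> f \<in> Hm" shows "c \<in> closure (orbit K D m c)"
proof -
  have "act K D m c (restrict id (carr K)) = c"
  proof
    fix f show "act K D m c (restrict id (carr K)) f = c f"
    proof (cases "f \<in> Hm")
      case True
      have "compose (D m) (restrict id (carr K)) f = f"
        using HD[OF True] by (auto simp: compose_def fun_eq_iff extensional_def)
      then show ?thesis using True by (simp add: act_eq)
    qed (use assms in \<open>auto simp: act_eq\<close>)
  qed
  then have "c \<in> orbit K D m c" using id_Aut unfolding orbit_def by (metis image_eqI)
  then show ?thesis by (rule closure_subset[THEN subsetD])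
qed

lemma minimal_from_recurrent:
  assumes "\<And>y. y \<in> closure (orbit K D m c) \<Longrightarrow> c \<in> closure (orbit K D m y)"
    and "\<And>f. c f \<Longrightarrow> f \<in> Hm"
  shows "minimal_set K D m {f. c f}"
proof -
  have cc: "(\<lambda>f. f \<in> {f. c f}) = c" by auto
  show ?thesis unfolding minimal_set_def cc
  proof (intro ballI equalityI subsetI)
    fix y z assume y: "y \<in> closure (orbit K D m c)"
    show "z \<in> closure (orbit K D m y) \<Longrightarrow> z \<in> closure (orbit K D m c)"
      by (rule closure_orbit_trans[OF y])
    show "z \<in> closure (orbit K D m c) \<Longrightarrow> z \<in> closure (orbit K D m y)"
      by (rule closure_orbit_trans[OF assms(1)[OF y]])
  qed
qed

lemma minimal_recurrent:
  assumes "minimal_set K D m S" "S \<subseteq> Hm" "y \<in> closure (orbit K D m (\<lambda>f. f \<in> S))"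
  shows "(\<lambda>f. f \<in> S) \<in> closure (orbit K D m y)"
  using assms self_in_closure[of "\<lambda>f. f \<in> S"] unfolding minimal_set_def by auto

end



context sett begin

lemma reduct_X: "Kp \<in> X_space ar ars Ks K \<Longrightarrow> reduct Kp = K" by (simp add: X_space_def)
lemma carr_X: "Kp \<in> X_space ar ars Ks K \<Longrightarrow> carr Kp = carr K"
  by (metis carr_reduct reduct_X)

lemma backward:
  assumes Kp: "Kp \<in> X_space ar ars Ks K" and E: "E \<subseteq> expansions_of Ks (A_ex K D m)"
  shows "minimal_set K D m (H_E K D m E Kp)"
proof -
  define S where "S = H_E K D m E Kp"
  have SH: "S \<subseteq> Hm" by (auto simp: S_def H_E_def)
  have Smem: "\<And>f. f \<in> S \<longleftrightarrow> f \<in> Hm \<and> pullback Kp (D m) f \<in> E" by (auto simp: S_def H_E_def)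
  have gKp: "good Kp" by (rule good_X[OF Kp])
  have rec: "(\<lambda>f. f \<in> S) \<in> closure (orbit K D m y)" if y: "y \<in> closure (orbit K D m (\<lambda>f. f \<in> S))" for y
    unfolding closure_orbit_iff
  proof (intro allI impI)
    fix \<Phi> :: "(nat \<Rightarrow> nat) set" assume fin: "finite \<Phi>"
    obtain n where n: "\<Phi> \<inter> Hm \<subseteq> Phi n" using Phi_cover[of "\<Phi> \<inter> Hm"] fin by auto
    define As where "As = substr Kp (D n)"
    have As: "As \<in> Ks" using gKp D_fin D_sub carr_X[OF Kp] unfolding As_def good_def by auto
    have redAs: "reduct As = A_ex K D n"
      unfolding As_def reduct_substr reduct_X[OF Kp] A_ex_def ..
    obtain B' where B': "B' \<in> KK" "\<forall>Bs\<in>expansions_of Ks B'. embeds As Bs" using exp_prop[OF As] by blast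
    obtain \<iota> where \<iota>: "\<iota> \<in> Emb B' K" using KK_emb[OF B'(1)] by blast
    have finB: "finite (carr B')" and wfB: "wf_struc ar B'" using KK_fin[OF B'(1)] by (auto simp: fin_struc_def)
    define V where "V = \<iota> ` carr B'"
    have "finite {f \<in> Hm. f ` D m \<subseteq> V}" using finB V_def by (simp add: Hm_into_fin)
    then have "\<exists>g\<in>Aut K. \<forall>f\<in>{f \<in> Hm. f ` D m \<subseteq> V}. act K D m (\<lambda>f. f \<in> S) g f = y f"
      using y by (simp only: closure_orbit_iff)
    then obtain g where g: "g \<in> Aut K" "\<forall>f\<in>{f \<in> Hm. f ` D m \<subseteq> V}. act K D m (\<lambda>f. f \<in> S) g f = y f"
      by (elim bexE)
    define \<phi> where "\<phi> = compose (carr B') g \<iota>"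
    have \<phi>: "\<phi> \<in> Emb B' K" unfolding \<phi>_def by (rule Emb_compose[OF \<iota> Aut_Emb[OF g(1)]])
    define Bs where "Bs = pullback Kp (carr B') \<phi>"
    have "Bs \<in> Ks" unfolding Bs_def
      by (rule pullback_Ks[OF gKp finB]) (use EmbD[OF \<phi>] carr_X[OF Kp] in auto)
    moreover have "reduct Bs = B'" unfolding Bs_def
      by (rule reduct_pullback[OF _ wfB]) (use \<phi> reduct_X[OF Kp] in simp)
    ultimately have "Bs \<in> expansions_of Ks B'" by (simp add: expansions_of_def)
    then have "embeds As Bs" using B'(2) by blast
    then obtain e0 where e0: "e0 \<in> Emb As Bs" by (auto simp: embeds_def)
    have e0r: "e0 \<in> Emb (A_ex K D n) B'"
      using Emb_reduct[OF e0] redAs \<open>reduct Bs = B'\<close> by simp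
    define e where "e = compose (D n) \<iota> e0"
    have "e \<in> Emb (A_ex K D n) K" unfolding e_def using Emb_compose[OF e0r \<iota>] by simp
    then obtain h0 where h0: "h0 \<in> Aut K" "\<forall>x\<in>D n. h0 x = e x" using uh by blast
    show "\<exists>h\<in>Aut K. \<forall>f\<in>\<Phi>. act K D m y h f = (f \<in> S)"
    proof (intro bexI ballI)
      show "h0 \<in> Aut K" by (rule h0(1))
      fix f assume f\<Phi>: "f \<in> \<Phi>"
      show "act K D m y h0 f = (f \<in> S)"
      proof (cases "f \<in> Hm")
        case False then show ?thesis using SH by (auto simp: act_eq)
      next
        case True
        then have fn: "f \<in> Phi n" using n f\<Phi> by auto
        then have fDn: "f ` D m \<subseteq> D n" by (simp add: Phi_def)
        define f' where "f' = compose (D m) h0 f"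
        have f'H: "f' \<in> Hm" unfolding f'_def by (rule Hm_compose[OF True h0(1)])
        have e0B: "e0 x \<in> carr B'" if "x \<in> D n" for x
          using EmbD(3)[OF e0r] that by auto
        have f'x: "f' x = \<iota> (e0 (f x))" if "x \<in> D m" for x
          using that fDn h0(2) by (auto simp: f'_def e_def compose_def)
        have "f' ` D m \<subseteq> V" using f'x e0B fDn unfolding V_def by auto
        then have "act K D m (\<lambda>f. f \<in> S) g f' = y f'" using g(2) f'H by auto
        then have yf': "y f' = (compose (D m) g f' \<in> S)" using f'H by (simp add: act_eq)
        have gfH: "compose (D m) g f' \<in> Hm" by (rule Hm_compose[OF f'H g(1)])
        have fB: "(compose (D m) e0 f) ` D m \<subseteq> carr B'" using fDn e0B by (auto simp: compose_def)
        have "pullback Kp (D m) (compose (D m) g f') = pullback Kp (D m) (compose (D m) \<phi> (compose (D m) e0 f))"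
          by (rule pullback_cong) (use f'x fDn e0B in \<open>auto simp: compose_def \<phi>_def\<close>)
        also have "\<dots> = pullback Bs (D m) (compose (D m) e0 f)"
          unfolding Bs_def by (rule pullback_pullback[OF fB, symmetric])
        also have "\<dots> = pullback As (D m) f"
          by (rule pullback_Emb[OF e0]) (use fDn As_def in simp)
        also have "\<dots> = pullback Kp (D m) f"
          unfolding As_def by (rule pullback_substr[OF fDn])
        finally have pe: "pullback Kp (D m) (compose (D m) g f') = pullback Kp (D m) f" .
        have "act K D m y h0 f = y f'" using True by (simp add: act_eq f'_def)
        also have "\<dots> = (f \<in> S)" using yf' Smem gfH True pe by simp
        finally show ?thesis .
      qed
    qed
  qed
  have "minimal_set K D m {f. f \<in> S}"
    by (rule minimal_from_recurrent) (use rec SH in auto)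
  then show ?thesis by (simp add: S_def)
qed

end



lemma koenig:
  fixes Q :: "nat \<Rightarrow> 'a \<Rightarrow> bool" and res :: "nat \<Rightarrow> 'a \<Rightarrow> 'a"
  assumes fin: "\<And>n. finite {x. Q n x}" and ne: "\<And>n. \<exists>x. Q n x"
    and rQ: "\<And>n k x. n \<le> k \<Longrightarrow> Q k x \<Longrightarrow> Q n (res n x)"
    and rr: "\<And>n k j x. n \<le> k \<Longrightarrow> k \<le> j \<Longrightarrow> Q j x \<Longrightarrow> res n (res k x) = res n x"
    and rid: "\<And>n x. Q n x \<Longrightarrow> res n x = x"
  shows "\<exists>s. \<forall>n. Q n (s n) \<and> (\<forall>k. n \<le> k \<longrightarrow> res n (s k) = s n)"
proof -
  have koenig_pigeon: "\<exists>x\<in>C. \<forall>k\<ge>n. \<exists>z. Q k z \<and> res n z = x"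
    if C: "finite C" and hit: "\<forall>k\<ge>n. \<exists>z. Q k z \<and> res n z \<in> C" for C n
  proof (rule ccontr)
    assume "\<not> ?thesis"
    then have "\<forall>x\<in>C. \<exists>k. k \<ge> n \<and> \<not> (\<exists>z. Q k z \<and> res n z = x)" by auto
    then obtain kx where kx: "\<And>x. x \<in> C \<Longrightarrow> kx x \<ge> n \<and> \<not> (\<exists>z. Q (kx x) z \<and> res n z = x)"
      by metis
    define K where "K = Max (insert n (kx ` C))"
    have Kn: "K \<ge> n" and Kx: "\<And>x. x \<in> C \<Longrightarrow> kx x \<le> K" using C by (auto simp: K_def)
    obtain z where z: "Q K z" "res n z \<in> C" using hit Kn by blast
    define x where "x = res n z"
    have x: "x \<in> C" using z x_def by simp
    have "Q (kx x) (res (kx x) z)" using rQ[OF Kx[OF x] z(1)] .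
    moreover have "res n (res (kx x) z) = x"
      using rr[of n "kx x" K z] kx[OF x] Kx[OF x] z(1) x_def by simp
    ultimately show False using kx[OF x] by blast
  qed
  define ext where "ext n x \<longleftrightarrow> Q n x \<and> (\<forall>k\<ge>n. \<exists>z. Q k z \<and> res n z = x)" for n x
  have ext0: "\<exists>x. ext 0 x"
  proof -
    have "\<forall>k\<ge>0. \<exists>z. Q k z \<and> res 0 z \<in> {x. Q 0 x}" using ne rQ by blast
    from koenig_pigeon[OF fin this] show ?thesis unfolding ext_def by blast
  qed
  have step: "\<exists>x'. ext (Suc n) x' \<and> res n x' = x" if exn: "ext n x" for n x
  proof -
    let ?C = "{x'. Q (Suc n) x' \<and> res n x' = x}"
    have finC: "finite ?C" using fin[of "Suc n"] by (rule finite_subset[rotated]) auto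
    have "\<forall>k\<ge>Suc n. \<exists>z. Q k z \<and> res (Suc n) z \<in> ?C"
    proof (intro allI impI)
      fix k assume k: "Suc n \<le> k"
      then obtain z where z: "Q k z" "res n z = x" using exn k unfolding ext_def by (meson Suc_leD)
      have "Q (Suc n) (res (Suc n) z)" using rQ[OF k z(1)] .
      moreover have "res n (res (Suc n) z) = x" using rr[of n "Suc n" k z] k z by simp
      ultimately show "\<exists>z. Q k z \<and> res (Suc n) z \<in> ?C" using z by blast
    qed
    from koenig_pigeon[OF finC this] show ?thesis unfolding ext_def by blast
  qed
  define s where "s = rec_nat (SOME x. ext 0 x) (\<lambda>n x. SOME x'. ext (Suc n) x' \<and> res n x' = x)"
  have s0: "s 0 = (SOME x. ext 0 x)" and sS: "\<And>n. s (Suc n) = (SOME x'. ext (Suc n) x' \<and> res n x' = s n)"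
    by (simp_all add: s_def)
  have es: "ext n (s n)" for n
  proof (induction n)
    case 0 then show ?case using ext0 s0 by (metis someI_ex)
  next
    case (Suc n)
    then show ?case using step[OF Suc] sS[of n] by (metis (mono_tags, lifting) someI_ex)
  qed
  have rs: "res n (s (Suc n)) = s n" for n
    using step[OF es[of n]] sS[of n] by (metis (mono_tags, lifting) someI_ex)
  have coh: "res n (s k) = s n" if "n \<le> k" for n k
    using that
  proof (induction k rule: dec_induct)
    case base then show ?case using es[of n] rid unfolding ext_def by blast
  next
    case (step k)
    have "res n (s (Suc k)) = res n (res k (s (Suc k)))"
      using rr[of n k "Suc k" "s (Suc k)"] step.hyps es[of "Suc k"] unfolding ext_def by simp
    also have "\<dots> = s n" using rs step.IH by simp
    finally show ?case .
  qed
  show ?thesis using es coh unfolding ext_def by blast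
qed

context sett begin

lemma ramsey2: assumes A: "A \<in> Ks" and B: "B \<in> Ks" and AB: "embeds A B"
  shows "\<exists>C\<in>Ks. embeds B C \<and> (\<forall>cb :: (nat \<Rightarrow> nat) \<Rightarrow> bool. \<exists>h\<in>Emb B C. \<exists>k. \<forall>e\<in>Emb A B. cb (compose (carr A) h e) = k)"
proof -
  obtain C where C: "C \<in> Ks" "embeds B C"
    and R: "\<And>c. c ` Emb A C \<subseteq> {..<2::nat} \<Longrightarrow> (\<exists>h\<in>Emb B C. \<exists>k. \<forall>e\<in>Emb A B. c (compose (carr A) h e) = k)"
    using ramsey A B AB unfolding ramsey_property_def by (metis le_refl)
  show ?thesis
  proof (intro bexI[where x=C] conjI allI)
    fix cb :: "(nat \<Rightarrow> nat) \<Rightarrow> bool"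
    have "(\<lambda>e. if cb e then 1 else 0::nat) ` Emb A C \<subseteq> {..<2}" by auto
    then obtain h k where h: "h \<in> Emb B C" "\<forall>e\<in>Emb A B. (if cb (compose (carr A) h e) then 1 else 0::nat) = k"
      using R by blast
    then have "\<forall>e\<in>Emb A B. cb (compose (carr A) h e) = (k = 1)" by (metis zero_neq_one)
    then show "\<exists>h\<in>Emb B C. \<exists>k. \<forall>e\<in>Emb A B. cb (compose (carr A) h e) = k" using h(1) by blast
  qed (use C in auto)
qed

lemma embeds_trans: "embeds A B \<Longrightarrow> embeds B C \<Longrightarrow> embeds A C"
  unfolding embeds_def using Emb_compose by blast

lemma ramsey_iter: assumes B: "B \<in> Ks" shows "set L \<subseteq> Ks \<Longrightarrow> \<exists>C\<in>Ks. embeds B C \<and>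
   (\<forall>c :: ('r + 's) struc \<Rightarrow> (nat \<Rightarrow> nat) \<Rightarrow> bool. \<exists>h\<in>Emb B C. \<forall>A\<in>set L. \<exists>k. \<forall>e\<in>Emb A B. c A (compose (carr A) h e) = k)"
proof (induction L)
  case Nil
  have "restrict id (carr B) \<in> Emb B B"
    using Emb_id_substr[of "carr B" B] substr_carr[of "arx ar ars" B] Ks_fin[OF B]
    by (simp add: fin_struc_def)
  then show ?case using B by (auto simp: embeds_def)
next
  case (Cons A L)
  then obtain C' where C': "C' \<in> Ks" "embeds B C'"
    and P': "\<And>c :: ('r + 's) struc \<Rightarrow> (nat \<Rightarrow> nat) \<Rightarrow> bool. \<exists>h\<in>Emb B C'. \<forall>A\<in>set L. \<exists>k. \<forall>e\<in>Emb A B. c A (compose (carr A) h e) = k"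
    by auto
  have A: "A \<in> Ks" using Cons.prems by simp
  show ?case
  proof (cases "embeds A C'")
    case True
    obtain C where C: "C \<in> Ks" "embeds C' C"
      and R: "\<And>cb :: (nat \<Rightarrow> nat) \<Rightarrow> bool. \<exists>h\<in>Emb C' C. \<exists>k. \<forall>e\<in>Emb A C'. cb (compose (carr A) h e) = k"
      using ramsey2[OF A C'(1) True] by blast
    show ?thesis
    proof (intro bexI[where x=C] conjI allI)
      show "embeds B C" using embeds_trans[OF C'(2) C(2)] .
      fix c :: "('r + 's) struc \<Rightarrow> (nat \<Rightarrow> nat) \<Rightarrow> bool"
      obtain h1 k1 where h1: "h1 \<in> Emb C' C" "\<forall>e\<in>Emb A C'. c A (compose (carr A) h1 e) = k1"
        using R[of "c A"] by blast
      obtain h2 where h2: "h2 \<in> Emb B C'"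
        "\<forall>A'\<in>set L. \<exists>k. \<forall>e\<in>Emb A' B. c A' (compose (carr A') h1 (compose (carr A') h2 e)) = k"
        using P'[of "\<lambda>A' e. c A' (compose (carr A') h1 e)"] by blast
      define h where "h = compose (carr B) h1 h2"
      have hE: "h \<in> Emb B C" unfolding h_def by (rule Emb_compose[OF h2(1) h1(1)])
      have ca: "compose (carr A') h e = compose (carr A') h1 (compose (carr A') h2 e)"
        if "e \<in> Emb A' B" for A' e
        unfolding h_def by (rule compose_assoc[OF EmbD(3)[OF that]])
      have "\<forall>A'\<in>set (A # L). \<exists>k. \<forall>e\<in>Emb A' B. c A' (compose (carr A') h e) = k"
      proof
        fix A' assume "A' \<in> set (A # L)"
        then consider "A' = A" | "A' \<in> set L" by auto
        then show "\<exists>k. \<forall>e\<in>Emb A' B. c A' (compose (carr A') h e) = k"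
        proof cases
          case 1
          have "\<forall>e\<in>Emb A' B. c A' (compose (carr A') h e) = k1"
          proof
            fix e assume e: "e \<in> Emb A' B"
            have "compose (carr A) h2 e \<in> Emb A C'" using Emb_compose[OF e h2(1)] 1 by simp
            then show "c A' (compose (carr A') h e) = k1" using ca[OF e] h1(2) 1 by simp
          qed
          then show ?thesis by blast
        next
          case 2
          then obtain k where "\<forall>e\<in>Emb A' B. c A' (compose (carr A') h1 (compose (carr A') h2 e)) = k"
            using h2(2) by blast
          then show ?thesis using ca by metis
        qed
      qed
      then show "\<exists>h\<in>Emb B C. \<forall>A\<in>set (A # L). \<exists>k. \<forall>e\<in>Emb A B. c A (compose (carr A) h e) = k"
        using hE by blast
    qed (use C in auto)
  next
    case False
    then have empty: "Emb A B = {}" using C'(2) embeds_trans unfolding embeds_def by blast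
    show ?thesis
    proof (intro bexI[where x=C'] conjI allI)
      fix c :: "('r + 's) struc \<Rightarrow> (nat \<Rightarrow> nat) \<Rightarrow> bool"
      obtain h where "h \<in> Emb B C'" "\<forall>A\<in>set L. \<exists>k. \<forall>e\<in>Emb A B. c A (compose (carr A) h e) = k"
        using P' by blast
      then show "\<exists>h\<in>Emb B C'. \<forall>A\<in>set (A # L). \<exists>k. \<forall>e\<in>Emb A B. c A (compose (carr A) h e) = k"
        using empty by auto
    qed (use C' in auto)
  qed
qed

end



context sett begin

lemma exp_Ks: "P \<in> expansions_of Ks A \<Longrightarrow> P \<in> Ks" by (simp add: expansions_of_def)
lemma exp_reduct: "P \<in> expansions_of Ks A \<Longrightarrow> reduct P = A" by (simp add: expansions_of_def)
lemma carr_exp: assumes "P \<in> expansions_of Ks (A_ex K D n)" shows "carr P = D n"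
proof -
  have "carr (reduct P) = D n" using exp_reduct[OF assms] by simp
  then show ?thesis by simp
qed

lemma level:
  fixes c :: "(nat \<Rightarrow> nat) \<Rightarrow> bool"
  shows "\<exists>P\<in>expansions_of Ks (A_ex K D n). \<exists>g\<in>Aut K. \<forall>f\<in>Phi n. \<forall>f'\<in>Phi n.
     pullback P (D m) f = pullback P (D m) f' \<longrightarrow> (c (compose (D m) g f) \<longleftrightarrow> c (compose (D m) g f'))"
proof -
  obtain P0 where P0: "P0 \<in> Ks" "reduct P0 = A_ex K D n"
    using A_ex_KK reduct_Ks by (metis imageE)
  obtain L where L: "set L = expansions_of Ks (A_ex K D m)"
    using precompact[OF A_ex_KK] finite_list by blast
  have LK: "set L \<subseteq> Ks" using L by (auto simp: expansions_of_def)
  obtain C where C: "C \<in> Ks"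
    and R: "\<And>c :: ('r + 's) struc \<Rightarrow> (nat \<Rightarrow> nat) \<Rightarrow> bool. \<exists>h\<in>Emb P0 C. \<forall>A\<in>set L. \<exists>k. \<forall>e\<in>Emb A P0. c A (compose (carr A) h e) = k"
    using ramsey_iter[OF P0(1) LK] by blast
  have "reduct C \<in> KK" using C reduct_Ks by blast
  then obtain \<iota> where \<iota>: "\<iota> \<in> Emb (reduct C) K" using KK_emb by blast
  obtain h where h: "h \<in> Emb P0 C"
    and hc: "\<forall>A\<in>set L. \<exists>k. \<forall>e\<in>Emb A P0. c (compose (carr A) \<iota> (compose (carr A) h e)) = k"
    using R[of "\<lambda>A e. c (compose (carr A) \<iota> e)"] by blast
  have hr: "h \<in> Emb (A_ex K D n) (reduct C)" using Emb_reduct[OF h] P0(2) by simp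
  have "compose (D n) \<iota> h \<in> Emb (A_ex K D n) K" using Emb_compose[OF hr \<iota>] by simp
  then obtain g where g: "g \<in> Aut K" "\<forall>x\<in>D n. g x = compose (D n) \<iota> h x" using uh by blast
  have cP0: "carr P0 = D n" using P0(2) by (metis carr_A_ex carr_reduct)
  show ?thesis
  proof (intro bexI[where x=P0] bexI[where x=g] ballI impI)
    show "P0 \<in> expansions_of Ks (A_ex K D n)" using P0 by (simp add: expansions_of_def)
    show "g \<in> Aut K" by (rule g(1))
    fix f f' assume f: "f \<in> Phi n" and f': "f' \<in> Phi n"
      and eq: "pullback P0 (D m) f = pullback P0 (D m) f'"
    define A where "A = pullback P0 (D m) f"
    have "f \<in> Emb (A_ex K D m) (reduct P0)" using Emb_Phi[OF f] P0(2) by simp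
    then have "A \<in> set L" unfolding A_def L using pullback_exp good_Ks[OF P0(1)] by blast
    have fD: "f \<in> Hm" "f ` D m \<subseteq> D n" using f by (auto simp: Phi_def)
    have f'D: "f' \<in> Hm" "f' ` D m \<subseteq> D n" using f' by (auto simp: Phi_def)
    have fA: "f \<in> Emb A P0" unfolding A_def
      by (rule Emb_pullback) (use HD[OF fD(1)] fD(2) cP0 in auto)
    have f'A: "f' \<in> Emb A P0" unfolding A_def eq
      by (rule Emb_pullback) (use HD[OF f'D(1)] f'D(2) cP0 in auto)
    obtain k where k: "\<forall>e\<in>Emb A P0. c (compose (carr A) \<iota> (compose (carr A) h e)) = k"
      using hc \<open>A \<in> set L\<close> by blast
    have cA: "carr A = D m" by (simp add: A_def)
    have gc: "compose (D m) g u = compose (D m) \<iota> (compose (D m) h u)" if "u ` D m \<subseteq> D n" for u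
      using that g(2) by (auto simp: compose_def fun_eq_iff)
    show "c (compose (D m) g f) \<longleftrightarrow> c (compose (D m) g f')"
      using k fA f'A gc[OF fD(2)] gc[OF f'D(2)] cA by simp
  qed
qed

lemma exp_restrict: assumes P: "P \<in> expansions_of Ks (A_ex K D k)" and nk: "n \<le> k"
  shows "substr P (D n) \<in> expansions_of Ks (A_ex K D n)"
proof -
  have "substr P (D n) \<in> Ks" using Ks_HP[OF exp_Ks[OF P]] carr_exp[OF P] D_mono[OF nk] by simp
  moreover have "reduct (substr P (D n)) = A_ex K D n"
    unfolding reduct_substr exp_reduct[OF P] A_ex_def by (rule substr_substr[OF D_mono[OF nk]])
  ultimately show ?thesis by (simp add: expansions_of_def)
qed

lemma exp_self: "P \<in> expansions_of Ks (A_ex K D n) \<Longrightarrow> substr P (D n) = P"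
  using substr_carr[of "arx ar ars" P] Ks_fin[OF exp_Ks] carr_exp by (simp add: fin_struc_def)

definition lim :: "(nat \<Rightarrow> ('r + 's) struc) \<Rightarrow> ('r + 's) struc" where
  "lim P = (carr K, \<lambda>R xs. \<exists>n. rel (P n) R xs)"

lemma carr_lim[simp]: "carr (lim P) = carr K" by (simp add: lim_def carr_def)
lemma rel_lim[simp]: "rel (lim P) R xs \<longleftrightarrow> (\<exists>n. rel (P n) R xs)" by (simp add: lim_def rel_def)

lemma lim_props:
  assumes P: "\<And>n. P n \<in> expansions_of Ks (A_ex K D n)"
    and coh: "\<And>n k. n \<le> k \<Longrightarrow> substr (P k) (D n) = P n"
  shows "substr (lim P) (D n) = P n" and "lim P \<in> X_space ar ars Ks K"
proof -
  have wfP: "wf_struc (arx ar ars) (P n)" for n using Ks_fin[OF exp_Ks[OF P]] by (simp add: fin_struc_def)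
  have relsub: "rel (P n) R xs \<Longrightarrow> set xs \<subseteq> D n" for n R xs
    using wfP[of n] carr_exp[OF P] unfolding wf_struc_def by blast
  have mono: "rel (P k) R xs" if "n \<le> k" "rel (P n) R xs" for n k R xs
  proof -
    have "rel (substr (P k) (D n)) R xs" using that coh[of n k] by simp
    then show ?thesis by simp
  qed
  have sub: "substr (lim P) (D n) = P n" for n
  proof (rule struc_eq)
    show "carr (substr (lim P) (D n)) = carr (P n)" using carr_exp[OF P] by simp
    fix R xs
    show "rel (substr (lim P) (D n)) R xs = rel (P n) R xs"
    proof
      assume "rel (substr (lim P) (D n)) R xs"
      then obtain k where k: "set xs \<subseteq> D n" "rel (P k) R xs" by auto
      have "rel (P (max n k)) R xs" using mono[OF _ k(2)] by simp
      moreover have "substr (P (max n k)) (D n) = P n" using coh by simp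
      ultimately show "rel (P n) R xs" using k(1) by (metis rel_substr)
    qed (use relsub in auto)
  qed
  then show "substr (lim P) (D n) = P n" .
  have wf: "wf_struc (arx ar ars) (lim P)"
    unfolding wf_struc_def
  proof (intro allI impI)
    fix R xs assume "rel (lim P) R xs"
    then obtain n where n: "rel (P n) R xs" by auto
    then show "length xs = arx ar ars R \<and> set xs \<subseteq> carr (lim P)"
      using wfP[of n] relsub[OF n] D_sub[of n] unfolding wf_struc_def by auto
  qed
  have red: "reduct (lim P) = K"
  proof (rule struc_eq)
    fix R xs
    have "rel (lim P) (Inl R) xs \<longleftrightarrow> (\<exists>n. set xs \<subseteq> D n \<and> rel K R xs)"
    proof -
      have "rel (P n) (Inl R) xs \<longleftrightarrow> set xs \<subseteq> D n \<and> rel K R xs" for n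
      proof -
        have "rel (P n) (Inl R) xs = rel (reduct (P n)) R xs" by simp
        also have "\<dots> = rel (substr K (D n)) R xs" using exp_reduct[OF P] by (simp add: A_ex_def)
        finally show ?thesis by simp
      qed
      then show ?thesis by simp
    qed
    also have "\<dots> \<longleftrightarrow> rel K R xs"
    proof
      assume "rel K R xs"
      then have "set xs \<subseteq> carr K" using wfK by (simp add: wf_struc_def)
      then show "\<exists>n. set xs \<subseteq> D n \<and> rel K R xs" using finite_in_D \<open>rel K R xs\<close> by blast
    qed auto
    finally show "rel (reduct (lim P)) R xs = rel K R xs" by simp
  qed simp
  have fs: "substr (lim P) Y \<in> Ks" if Y: "finite Y" "Y \<subseteq> carr (lim P)" for Y
  proof -
    obtain n where n: "Y \<subseteq> D n" using finite_in_D[of Y] Y by auto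
    have "substr (lim P) Y = substr (P n) Y" using substr_substr[OF n, of "lim P"] sub[of n] by simp
    then show ?thesis using Ks_HP[OF exp_Ks[OF P]] n carr_exp[OF P] by simp
  qed
  show "lim P \<in> X_space ar ars Ks K" using wf red fs by (simp add: X_space_def)
qed

lemma lim_pullback:
  assumes P: "\<And>n. P n \<in> expansions_of Ks (A_ex K D n)"
    and coh: "\<And>n k. n \<le> k \<Longrightarrow> substr (P k) (D n) = P n"
    and f: "f \<in> Phi n"
  shows "pullback (lim P) (D m) f = pullback (P n) (D m) f"
proof -
  have "f ` D m \<subseteq> D n" using f by (simp add: Phi_def)
  then show ?thesis using pullback_substr[of f "D m" "D n" "lim P"] lim_props(1)[OF P coh] by simp
qed

end



context sett begin

lemma core:
  fixes c :: "(nat \<Rightarrow> nat) \<Rightarrow> bool"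
  shows "\<exists>Kp\<in>X_space ar ars Ks K. \<exists>y\<in>closure (orbit K D m c).
     \<forall>f\<in>Hm. \<forall>f'\<in>Hm. pullback Kp (D m) f = pullback Kp (D m) f' \<longrightarrow> y f = y f'"
proof -
  define Q where "Q n x \<longleftrightarrow> fst x \<in> expansions_of Ks (A_ex K D n) \<and> snd x \<subseteq> Phi n \<and>
     (\<forall>f\<in>Phi n. \<forall>f'\<in>Phi n. pullback (fst x) (D m) f = pullback (fst x) (D m) f' \<longrightarrow> (f \<in> snd x \<longleftrightarrow> f' \<in> snd x)) \<and>
     (\<exists>g\<in>Aut K. \<forall>f\<in>Phi n. (f \<in> snd x) = c (compose (D m) g f))" for n x
  define res where "res n x = (substr (fst x) (D n), snd x \<inter> Phi n)"
    for n and x :: "('r + 's) struc \<times> (nat \<Rightarrow> nat) set"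
  have QD1: "fst x \<in> expansions_of Ks (A_ex K D n)" if "Q n x" for n x
    using that unfolding Q_def by (rule conjunct1)
  have QD2: "snd x \<subseteq> Phi n" if "Q n x" for n x
    using that unfolding Q_def by (rule conjunct2[THEN conjunct1])
  have QD3: "\<forall>f\<in>Phi n. \<forall>f'\<in>Phi n. pullback (fst x) (D m) f = pullback (fst x) (D m) f' \<longrightarrow> (f \<in> snd x \<longleftrightarrow> f' \<in> snd x)"
    if "Q n x" for n x
    using that unfolding Q_def by (rule conjunct2[THEN conjunct2, THEN conjunct1])
  have QD4: "\<exists>g\<in>Aut K. \<forall>f\<in>Phi n. (f \<in> snd x) = c (compose (D m) g f)" if "Q n x" for n x
    using that unfolding Q_def by (rule conjunct2[THEN conjunct2, THEN conjunct2])
  have QI: "Q n x" if "fst x \<in> expansions_of Ks (A_ex K D n)" "snd x \<subseteq> Phi n"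
    "\<forall>f\<in>Phi n. \<forall>f'\<in>Phi n. pullback (fst x) (D m) f = pullback (fst x) (D m) f' \<longrightarrow> (f \<in> snd x \<longleftrightarrow> f' \<in> snd x)"
    "\<exists>g\<in>Aut K. \<forall>f\<in>Phi n. (f \<in> snd x) = c (compose (D m) g f)" for n x
    using that unfolding Q_def by (intro conjI)
  have "\<exists>s. \<forall>n. Q n (s n) \<and> (\<forall>k. n \<le> k \<longrightarrow> res n (s k) = s n)"
  proof (rule koenig)
    fix n
    have "{x. Q n x} \<subseteq> expansions_of Ks (A_ex K D n) \<times> Pow (Phi n)"
    proof
      fix x assume "x \<in> {x. Q n x}"
      then have "Q n x" by simp
      then show "x \<in> expansions_of Ks (A_ex K D n) \<times> Pow (Phi n)"
        using QD1 QD2 by (metis PowI mem_Times_iff)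
    qed
    then show "finite {x. Q n x}" using precompact[OF A_ex_KK] Phi_fin finite_subset by blast
    obtain P g where P: "P \<in> expansions_of Ks (A_ex K D n)" and g: "g \<in> Aut K"
      and t: "\<forall>f\<in>Phi n. \<forall>f'\<in>Phi n. pullback P (D m) f = pullback P (D m) f' \<longrightarrow> (c (compose (D m) g f) \<longleftrightarrow> c (compose (D m) g f'))"
      using level[of n c] by blast
    have "Q n (P, {f \<in> Phi n. c (compose (D m) g f)})"
    proof (rule QI)
      show "\<forall>f\<in>Phi n. \<forall>f'\<in>Phi n. pullback (fst (P, {f \<in> Phi n. c (compose (D m) g f)})) (D m) f =
        pullback (fst (P, {f \<in> Phi n. c (compose (D m) g f)})) (D m) f' \<longrightarrow>
        (f \<in> snd (P, {f \<in> Phi n. c (compose (D m) g f)})) = (f' \<in> snd (P, {f \<in> Phi n. c (compose (D m) g f)}))"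
      proof (intro ballI impI)
        fix f f' assume f: "f \<in> Phi n" and f': "f' \<in> Phi n" and
          e: "pullback (fst (P, {f \<in> Phi n. c (compose (D m) g f)})) (D m) f =
        pullback (fst (P, {f \<in> Phi n. c (compose (D m) g f)})) (D m) f'"
        from e have "pullback P (D m) f = pullback P (D m) f'" by (simp only: fst_conv)
        then have "c (compose (D m) g f) \<longleftrightarrow> c (compose (D m) g f')" using t f f' by blast
        then show "(f \<in> snd (P, {f \<in> Phi n. c (compose (D m) g f)})) = (f' \<in> snd (P, {f \<in> Phi n. c (compose (D m) g f)}))"
          using f f' by (simp only: snd_conv mem_Collect_eq simp_thms)
      qed
      show "\<exists>ga\<in>Aut K. \<forall>f\<in>Phi n. (f \<in> snd (P, {f \<in> Phi n. c (compose (D m) g f)})) = c (compose (D m) ga f)"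
        using g by auto
    qed (use P in auto)
    then show "\<exists>x. Q n x" by blast
  next
    fix n k x assume nk: "n \<le> k" and Qx: "Q k x"
    have PhiS: "Phi n \<subseteq> Phi k" by (rule Phi_mono[OF nk])
    have pb: "pullback (substr (fst x) (D n)) (D m) f = pullback (fst x) (D m) f" if "f \<in> Phi n" for f
      using that by (intro pullback_substr) (simp add: Phi_def)
    show "Q n (res n x)" unfolding res_def
    proof (rule QI)
      show "fst (substr (fst x) (D n), snd x \<inter> Phi n) \<in> expansions_of Ks (A_ex K D n)"
        using exp_restrict[OF QD1[OF Qx] nk] by simp
      show "\<forall>f\<in>Phi n. \<forall>f'\<in>Phi n. pullback (fst (substr (fst x) (D n), snd x \<inter> Phi n)) (D m) f =
          pullback (fst (substr (fst x) (D n), snd x \<inter> Phi n)) (D m) f' \<longrightarrow>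
          (f \<in> snd (substr (fst x) (D n), snd x \<inter> Phi n)) = (f' \<in> snd (substr (fst x) (D n), snd x \<inter> Phi n))"
      proof (intro ballI impI)
        fix f f' assume f: "f \<in> Phi n" and f': "f' \<in> Phi n"
          and "pullback (fst (substr (fst x) (D n), snd x \<inter> Phi n)) (D m) f =
          pullback (fst (substr (fst x) (D n), snd x \<inter> Phi n)) (D m) f'"
        then have "pullback (fst x) (D m) f = pullback (fst x) (D m) f'" using pb by simp
        then have "(f \<in> snd x) = (f' \<in> snd x)" using QD3[OF Qx] f f' PhiS by blast
        then show "(f \<in> snd (substr (fst x) (D n), snd x \<inter> Phi n)) = (f' \<in> snd (substr (fst x) (D n), snd x \<inter> Phi n))"
          using f f' by simp
      qed
      obtain g where g: "g \<in> Aut K" "\<forall>f\<in>Phi k. (f \<in> snd x) = c (compose (D m) g f)" using QD4[OF Qx] by blast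
      show "\<exists>g\<in>Aut K. \<forall>f\<in>Phi n. (f \<in> snd (substr (fst x) (D n), snd x \<inter> Phi n)) = c (compose (D m) g f)"
        using g PhiS by auto
    qed auto
  next
    fix n k j x assume nk: "n \<le> k" "k \<le> j" and Qx: "Q j x"
    show "res n (res k x) = res n x" unfolding res_def
      using substr_substr[OF D_mono[OF nk(1)], of "fst x"] Phi_mono[OF nk(1)] by auto
  next
    fix n x assume Qx: "Q n x"
    then show "res n x = x" unfolding res_def using exp_self QD1[OF Qx] QD2[OF Qx] by (auto simp: prod_eq_iff)
  qed
  then obtain s where s: "\<And>n. Q n (s n)" "\<And>n k. n \<le> k \<Longrightarrow> res n (s k) = s n" by blast
  define P where "P n = fst (s n)" for n
  define T where "T n = snd (s n)" for n
  have P: "P n \<in> expansions_of Ks (A_ex K D n)" for n unfolding P_def by (rule QD1[OF s(1)])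
  have coh: "substr (P k) (D n) = P n" if "n \<le> k" for n k
    using s(2)[OF that] by (simp add: res_def P_def prod_eq_iff)
  have cohT: "T k \<inter> Phi n = T n" if "n \<le> k" for n k
    using s(2)[OF that] by (simp add: res_def T_def prod_eq_iff)
  have TP: "T n \<subseteq> Phi n" for n unfolding T_def by (rule QD2[OF s(1)])
  have Ttd: "\<forall>f\<in>Phi n. \<forall>f'\<in>Phi n. pullback (P n) (D m) f = pullback (P n) (D m) f' \<longrightarrow> (f \<in> T n \<longleftrightarrow> f' \<in> T n)" for n
    unfolding T_def P_def by (rule QD3[OF s(1)])
  have Tg: "\<exists>g\<in>Aut K. \<forall>f\<in>Phi n. (f \<in> T n) = c (compose (D m) g f)" for n
    unfolding T_def by (rule QD4[OF s(1)])
  define y where "y f \<longleftrightarrow> (\<exists>n. f \<in> T n)" for f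
  have yT: "y f \<longleftrightarrow> f \<in> T n" if f: "f \<in> Phi n" for f n
  proof
    assume "y f"
    then obtain k where k: "f \<in> T k" by (auto simp: y_def)
    have "f \<in> T (max n k)" using k cohT[of k "max n k"] by auto
    then show "f \<in> T n" using cohT[of n "max n k"] f by auto
  qed (auto simp: y_def)
  have yH: "y f \<Longrightarrow> f \<in> Hm" for f using TP by (auto simp: y_def Phi_def)
  have Kp: "lim P \<in> X_space ar ars Ks K" by (rule lim_props(2)[OF P coh])
  have ycl: "y \<in> closure (orbit K D m c)"
    unfolding closure_orbit_iff
  proof (intro allI impI)
    fix \<Phi> :: "(nat \<Rightarrow> nat) set" assume "finite \<Phi>"
    then obtain n where n: "\<Phi> \<inter> Hm \<subseteq> Phi n" using Phi_cover[of "\<Phi> \<inter> Hm"] by auto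
    obtain g where g: "g \<in> Aut K" "\<forall>f\<in>Phi n. (f \<in> T n) = c (compose (D m) g f)" using Tg by blast
    have "\<forall>f\<in>\<Phi>. act K D m c g f = y f"
    proof
      fix f assume "f \<in> \<Phi>"
      show "act K D m c g f = y f"
      proof (cases "f \<in> Hm")
        case True
        then have "f \<in> Phi n" using n \<open>f \<in> \<Phi>\<close> by auto
        then show ?thesis using g(2) yT True by (simp add: act_eq)
      next
        case False then show ?thesis using yH by (auto simp: act_eq)
      qed
    qed
    then show "\<exists>g\<in>Aut K. \<forall>f\<in>\<Phi>. act K D m c g f = y f" using g(1) by blast
  qed
  have ytd: "\<forall>f\<in>Hm. \<forall>f'\<in>Hm. pullback (lim P) (D m) f = pullback (lim P) (D m) f' \<longrightarrow> y f = y f'"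
  proof (intro ballI impI)
    fix f f' assume f: "f \<in> Hm" and f': "f' \<in> Hm" and eq: "pullback (lim P) (D m) f = pullback (lim P) (D m) f'"
    obtain n where n: "{f, f'} \<subseteq> Phi n" using Phi_cover[of "{f, f'}"] f f' by auto
    then have "pullback (P n) (D m) f = pullback (P n) (D m) f'"
      using eq lim_pullback[OF P coh] by auto
    then show "y f = y f'" using Ttd[of n] n yT by auto
  qed
  show ?thesis using Kp ycl ytd by blast
qed

lemma forward:
  assumes min: "minimal_set K D m S" and SH: "S \<subseteq> Hm"
  shows "\<exists>Kp\<in>X_space ar ars Ks K. \<exists>E\<subseteq>expansions_of Ks (A_ex K D m). S = H_E K D m E Kp"
proof -
  obtain Kp0 y where Kp0: "Kp0 \<in> X_space ar ars Ks K" and ycl: "y \<in> closure (orbit K D m (\<lambda>f. f \<in> S))"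
    and ytd: "\<forall>f\<in>Hm. \<forall>f'\<in>Hm. pullback Kp0 (D m) f = pullback Kp0 (D m) f' \<longrightarrow> y f = y f'"
    using core[of "\<lambda>f. f \<in> S"] by blast
  have rec: "(\<lambda>f. f \<in> S) \<in> closure (orbit K D m y)" by (rule minimal_recurrent[OF min SH ycl])
  define Q where "Q n P \<longleftrightarrow> P \<in> expansions_of Ks (A_ex K D n) \<and>
     (\<forall>f\<in>Phi n. \<forall>f'\<in>Phi n. pullback P (D m) f = pullback P (D m) f' \<longrightarrow> (f \<in> S \<longleftrightarrow> f' \<in> S))" for n P
  define res where "res n P = substr P (D n)" for n and P :: "('r + 's) struc"
  have "\<exists>s. \<forall>n. Q n (s n) \<and> (\<forall>k. n \<le> k \<longrightarrow> res n (s k) = s n)"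
  proof (rule koenig)
    fix n
    have "{x. Q n x} \<subseteq> expansions_of Ks (A_ex K D n)" by (auto simp: Q_def)
    then show "finite {x. Q n x}" using precompact[OF A_ex_KK] finite_subset by blast
    have "\<exists>h\<in>Aut K. \<forall>f\<in>Phi n. act K D m y h f = (f \<in> S)"
      using rec Phi_fin[of n] by (simp only: closure_orbit_iff)
    then obtain h where h: "h \<in> Aut K" "\<forall>f\<in>Phi n. act K D m y h f = (f \<in> S)" by (elim bexE)
    define hr where "hr = restrict h (D n)"
    have hrE: "hr \<in> Emb (A_ex K D n) K"
      unfolding hr_def A_ex_def by (rule Emb_restrict[OF Aut_Emb[OF h(1)] D_sub])
    define P where "P = pullback Kp0 (D n) hr"
    have "P \<in> Ks" unfolding P_def
      by (rule pullback_Ks[OF good_X[OF Kp0] D_fin]) (use EmbD[OF hrE] carr_X[OF Kp0] in auto)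
    moreover have "reduct P = A_ex K D n"
      using reduct_pullback[of hr "A_ex K D n" Kp0 ar] hrE reduct_X[OF Kp0] KK_fin[OF A_ex_KK]
      by (simp add: P_def fin_struc_def)
    ultimately have PE: "P \<in> expansions_of Ks (A_ex K D n)" by (simp add: expansions_of_def)
    have pbP: "pullback P (D m) f = pullback Kp0 (D m) (compose (D m) h f)" if "f \<in> Phi n" for f
    proof -
      have fD: "f ` D m \<subseteq> D n" using that by (simp add: Phi_def)
      have "pullback P (D m) f = pullback Kp0 (D m) (compose (D m) hr f)"
        unfolding P_def by (rule pullback_pullback[OF fD])
      also have "\<dots> = pullback Kp0 (D m) (compose (D m) h f)"
        by (rule pullback_cong) (use fD in \<open>auto simp: compose_def hr_def\<close>)
      finally show ?thesis .
    qed
    have "Q n P" unfolding Q_def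
    proof (intro conjI PE ballI impI)
      fix f f' assume f: "f \<in> Phi n" and f': "f' \<in> Phi n" and eq: "pullback P (D m) f = pullback P (D m) f'"
      have fH: "f \<in> Hm" and f'H: "f' \<in> Hm" using f f' by (auto simp: Phi_def)
      have "y (compose (D m) h f) = y (compose (D m) h f')"
      proof -
        have "pullback Kp0 (D m) (compose (D m) h f) = pullback Kp0 (D m) (compose (D m) h f')"
          using eq pbP[OF f] pbP[OF f'] by simp
        then show ?thesis using ytd Hm_compose[OF fH h(1)] Hm_compose[OF f'H h(1)] by blast
      qed
      moreover have "act K D m y h f = (f \<in> S)" "act K D m y h f' = (f' \<in> S)" using h(2) f f' by auto
      ultimately show "(f \<in> S) = (f' \<in> S)" using fH f'H by (simp add: act_eq)
    qed
    then show "\<exists>x. Q n x" by blast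
  next
    fix n k x assume nk: "n \<le> k" and Qx: "Q k x"
    have pb: "pullback (substr x (D n)) (D m) f = pullback x (D m) f" if "f \<in> Phi n" for f
      using that by (intro pullback_substr) (simp add: Phi_def)
    have xE: "x \<in> expansions_of Ks (A_ex K D k)" and xt: "\<forall>f\<in>Phi k. \<forall>f'\<in>Phi k. pullback x (D m) f = pullback x (D m) f' \<longrightarrow> (f \<in> S \<longleftrightarrow> f' \<in> S)"
      using Qx[unfolded Q_def] by blast+
    show "Q n (res n x)" unfolding Q_def res_def
    proof (intro conjI ballI impI)
      show "substr x (D n) \<in> expansions_of Ks (A_ex K D n)" by (rule exp_restrict[OF xE nk])
      fix f f' assume f: "f \<in> Phi n" and f': "f' \<in> Phi n"
        and "pullback (substr x (D n)) (D m) f = pullback (substr x (D n)) (D m) f'"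
      then have "pullback x (D m) f = pullback x (D m) f'" using pb by simp
      then show "(f \<in> S) = (f' \<in> S)" using xt f f' Phi_mono[OF nk] by blast
    qed
  next
    fix n k j x assume nk: "n \<le> k" "k \<le> j" and Qx: "Q j x"
    show "res n (res k x) = res n x" unfolding res_def
      by (rule substr_substr[OF D_mono[OF nk(1)]])
  next
    fix n x assume Qx: "Q n x"
    then show "res n x = x" unfolding res_def Q_def using exp_self by auto
  qed
  then obtain s where s: "\<And>n. Q n (s n)" "\<And>n k. n \<le> k \<Longrightarrow> res n (s k) = s n" by blast
  have P: "s n \<in> expansions_of Ks (A_ex K D n)" for n using s(1) by (simp add: Q_def)
  have coh: "substr (s k) (D n) = s n" if "n \<le> k" for n k using s(2)[OF that] by (simp add: res_def)
  define Kp where "Kp = lim s"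
  have Kp: "Kp \<in> X_space ar ars Ks K" unfolding Kp_def by (rule lim_props(2)[OF P coh])
  define E where "E = (\<lambda>f. pullback Kp (D m) f) ` S"
  have E: "E \<subseteq> expansions_of Ks (A_ex K D m)"
  proof
    fix A assume "A \<in> E"
    then obtain f where f: "f \<in> S" "A = pullback Kp (D m) f" by (auto simp: E_def)
    have "f \<in> Emb (A_ex K D m) (reduct Kp)" using f(1) SH reduct_X[OF Kp] by (auto simp: H_def)
    then show "A \<in> expansions_of Ks (A_ex K D m)" using pullback_exp good_X[OF Kp] f(2) by blast
  qed
  have "S = H_E K D m E Kp"
  proof
    show "S \<subseteq> H_E K D m E Kp" using SH by (auto simp: H_E_def E_def)
    show "H_E K D m E Kp \<subseteq> S"
    proof
      fix f assume "f \<in> H_E K D m E Kp"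
      then obtain f0 where f: "f \<in> Hm" and f0: "f0 \<in> S" "pullback Kp (D m) f = pullback Kp (D m) f0"
        by (auto simp: H_E_def E_def)
      obtain n where n: "{f, f0} \<subseteq> Phi n" using Phi_cover[of "{f, f0}"] f f0(1) SH by auto
      then have "pullback (s n) (D m) f = pullback (s n) (D m) f0"
        using f0(2) lim_pullback[OF P coh] unfolding Kp_def by auto
      then show "f \<in> S" using s(1)[of n] n f0(1) unfolding Q_def by auto
    qed
  qed
  then show ?thesis using Kp E by blast
qed

end

theorem mainTheorem5:
  fixes ar :: "'r \<Rightarrow> nat" and ars :: "'s \<Rightarrow> nat"
    and KK :: "'r struc set" and K :: "'r struc" and D :: "nat \<Rightarrow> nat set"
    and Ks :: "('r + 's) struc set" and m :: nat and S :: "(nat \<Rightarrow> nat) set"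
  assumes "fraisse_class ar KK"
    and "fraisse_limit ar KK K"
    and "exhaustion K D"
    and "is_expansion ar ars Ks KK"
    and "excellent ar ars Ks KK"
    and "S \<subseteq> H K D m"
  shows "minimal_set K D m S \<longleftrightarrow>
    (\<exists>Kp \<in> X_space ar ars Ks K. \<exists>E \<subseteq> expansions_of Ks (A_ex K D m). S = H_E K D m E Kp)"
proof -
  interpret sett ar ars KK K D Ks m using assms by (simp add: sett_def)
  show ?thesis using forward[OF _ assms(6)] backward by blast
qed


end
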